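(* Let $G=(V,E)$ be a graph. Then $\mu(G)=\min|E_G(S;V\setminus T)|$, where the minimum ranges over all pairs of disjoint subsets $S,T\subseteq V$ with $|S|>|T|$.
   Context: All graphs are finite and simple. For a graph $G=(V,E)$ on $n$ vertices, a fractional vertex cover is a function $f:V\to[0,\infty)$ with $f(u)+f(v)\ge 1$ for every edge $uv\in E$; $\tau^*(G)$ denotes the minimum of $\sum_{v\in V}f(v)$ over all fractional vertex covers. For $E'\subseteq E$ let $G-E'=(V,E\setminus E')$. Define $\mu(G)=\min\{|E'| : E'\subseteq E,\ \tau^*(G-E')<n/2\}$. For disjoint $S,T\subseteq V$, $E_G(S;V\setminus T)$ denotes the set of edges of $G$ that either have both endpoints in $S$, or have one endpoint in $S$ and the other in $V\setminus(S\cup T)$. *)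

theory Defs
  imports Complex_Main
begin

definition simple_graph :: "'a set \<Rightarrow> 'a set set \<Rightarrow> bool" where
  "simple_graph V E \<longleftrightarrow> finite V \<and> (\<forall>e\<in>E. e \<subseteq> V \<and> card e = 2)"

definition frac_vertex_cover :: "'a set \<Rightarrow> 'a set set \<Rightarrow> ('a \<Rightarrow> real) \<Rightarrow> bool" where
  "frac_vertex_cover V E f \<longleftrightarrow>
     (\<forall>v\<in>V. f v \<ge> 0) \<and> (\<forall>u v. {u, v} \<in> E \<longrightarrow> f u + f v \<ge> 1)"

definition tau_star :: "'a set \<Rightarrow> 'a set set \<Rightarrow> real" where
  "tau_star V E = Inf {(\<Sum>v\<in>V. f v) | f. frac_vertex_cover V E f}"

definition mu :: "'a set \<Rightarrow> 'a set set \<Rightarrow> nat" where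
  "mu V E = Inf {card E' | E'. E' \<subseteq> E \<and> tau_star V (E - E') < real (card V) / 2}"

definition edges_ST :: "'a set \<Rightarrow> 'a set set \<Rightarrow> 'a set \<Rightarrow> 'a set \<Rightarrow> 'a set set" where
  "edges_ST V E S T = {e \<in> E. \<exists>u v. e = {u, v} \<and> u \<in> S \<and> (v \<in> S \<or> v \<in> V - (S \<union> T))}"

end

theory Submission
  imports Defs
begin

lemma balance:
  fixes b :: "'a \<Rightarrow> real"
  assumes "finite X" "\<forall>s\<ge>0. card {x\<in>X. b x < -s} \<le> card {x\<in>X. b x > s}"
  shows "0 \<le> sum b X"
  using assms
proof (induction "card X" arbitrary: X rule: less_induct)
  case less
  show ?case
  proof (cases "\<exists>x\<in>X. b x < 0")
    case False then show ?thesis by (simp add: sum_nonneg not_less)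
  next
    case True
    then have ne: "X \<noteq> {}" by auto
    define u where "u = (SOME u. u \<in> X \<and> b u = Min (b ` X))"
    have "\<exists>u. u \<in> X \<and> b u = Min (b ` X)"
    proof -
      have "Min (b ` X) \<in> b ` X" using Min_in less.prems(1) ne by simp
      then show ?thesis by auto
    qed
    then have u: "u \<in> X" "b u = Min (b ` X)" unfolding u_def by (metis (mono_tags, lifting) someI_ex)+
    have umin: "\<forall>x\<in>X. b u \<le> b x" using u less.prems(1) by simp
    define m where "m = - b u"
    have m0: "m > 0" using True umin m_def by force
    have "\<exists>w\<in>X. b w \<ge> m"
    proof (rule ccontr)
      assume "\<not> (\<exists>w\<in>X. b w \<ge> m)"
      then have lt: "\<forall>w\<in>X. b w < m" by auto
      define s where "s = max 0 (Max (b ` X))"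
      have "Max (b ` X) \<in> b ` X" using Min_in less.prems(1) ne by (simp)
      then have "s < m" using lt m0 s_def by auto
      have s0: "s \<ge> 0" using s_def by simp
      have "\<forall>x\<in>X. b x \<le> Max (b ` X)" using less.prems(1) by simp
      then have e: "{x\<in>X. b x > s} = {}" using s_def by fastforce
      have "u \<in> {x\<in>X. b x < -s}" using u(1) \<open>s < m\<close> m_def by auto
      then have "card {x\<in>X. b x < -s} > 0" using less.prems(1) by (metis (no_types, lifting) card_gt_0_iff empty_iff finite_subset mem_Collect_eq subsetI)
      moreover have "card {x\<in>X. b x < -s} \<le> card {x\<in>X. b x > s}" using less.prems(2) s0 by blast
      ultimately show False using e by simp
    qed
    then obtain w where w: "w \<in> X" "b w \<ge> m" by auto
    have wu: "w \<noteq> u" using w m0 m_def by auto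
    define X' where "X' = X - {u,w}"
    have fX': "finite X'" using less.prems(1) X'_def by simp
    have cX: "card X' < card X" unfolding X'_def using u(1) w(1) less.prems(1)
      by (metis Diff_insert2 card_Diff2_less insert_Diff_single)
    have cond: "\<forall>s\<ge>0. card {x\<in>X'. b x < -s} \<le> card {x\<in>X'. b x > s}"
    proof (intro allI impI)
      fix s :: real assume s0: "s \<ge> 0"
      show "card {x\<in>X'. b x < -s} \<le> card {x\<in>X'. b x > s}"
      proof (cases "s < m")
        case True
        have e1: "{x\<in>X. b x < -s} = insert u {x\<in>X'. b x < -s}"
          using True m_def u(1) w wu m0 s0 unfolding X'_def by auto
        have e2: "{x\<in>X. b x > s} = insert w {x\<in>X'. b x > s}"
          using True m_def u(1) w wu m0 s0 unfolding X'_def by auto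
        have "card {x\<in>X. b x < -s} = Suc (card {x\<in>X'. b x < -s})"
          unfolding e1 using fX' X'_def by (simp)
        moreover have "card {x\<in>X. b x > s} = Suc (card {x\<in>X'. b x > s})"
          unfolding e2 using fX' X'_def by (simp)
        ultimately show ?thesis using less.prems(2) s0 by force
      next
        case False
        have "{x\<in>X'. b x < -s} = {}" using False umin m_def X'_def by force
        then show ?thesis by (metis card.empty le0)
      qed
    qed
    have IH: "0 \<le> sum b X'" using less.hyps[OF cX fX' cond] .
    have "sum b X = b u + sum b (X - {u})" using u(1) less.prems(1) by (simp add: sum.remove)
    also have "sum b (X - {u}) = b w + sum b X'"
      using w(1) wu less.prems(1) unfolding X'_def
      by (metis Diff_insert2 finite_Diff insert_Diff insert_Diff_single insert_iff sum.insert_remove sum.remove)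
    finally show ?thesis using IH w m_def by linarith
  qed
qed

lemma cover_set_ne: "{(\<Sum>v\<in>V. f v) | f. frac_vertex_cover V H f} \<noteq> {}"
proof -
  have "frac_vertex_cover V H (\<lambda>_. 1)" unfolding frac_vertex_cover_def by simp
  then show ?thesis by blast
qed

lemma cover_set_bdd: "bdd_below {(\<Sum>v\<in>V. f v) | f. frac_vertex_cover V H f}"
  unfolding bdd_below_def frac_vertex_cover_def
  by (rule exI[of _ 0]) (auto intro: sum_nonneg)

lemma tau_lt_imp:
  assumes fin: "finite V" and sub: "\<forall>e\<in>H. e \<subseteq> V" and lt: "tau_star V H < real (card V)/2"
  shows "\<exists>S T. S \<subseteq> V \<and> T \<subseteq> V \<and> S \<inter> T = {} \<and> card S > card T \<and> edges_ST V H S T = {}"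
proof -
  obtain f where f: "frac_vertex_cover V H f" "(\<Sum>v\<in>V. f v) < real (card V)/2"
    using cInf_lessD[OF cover_set_ne lt[unfolded tau_star_def]] by auto
  have fnn: "\<forall>v\<in>V. f v \<ge> 0" and fc: "\<forall>u v. {u, v} \<in> H \<longrightarrow> f u + f v \<ge> 1"
    using f(1) unfolding frac_vertex_cover_def by auto
  define b where "b v = min (f v) 1 - 1/2" for v
  have "sum b V = (\<Sum>v\<in>V. min (f v) 1) - real (card V)/2"
    unfolding b_def by (simp add: sum_subtractf)
  also have "(\<Sum>v\<in>V. min (f v) 1) \<le> (\<Sum>v\<in>V. f v)" by (rule sum_mono) simp
  finally have "sum b V < 0" using f(2) by linarith
  then obtain s where s0: "s \<ge> 0" and sc: "card {x\<in>V. b x < -s} > card {x\<in>V. b x > s}"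
    using balance[OF fin, of b] by force
  define S where "S = {x\<in>V. b x < -s}"
  define T where "T = {x\<in>V. b x > s}"
  have "S \<noteq> {}" using sc S_def by (metis card.empty not_less0)
  then obtain x where "x \<in> S" by auto
  then have "s < 1/2" using fnn S_def b_def by force
  have "edges_ST V H S T = {}"
  proof (rule ccontr)
    assume "edges_ST V H S T \<noteq> {}"
    then obtain e u v where e: "e \<in> H" "e = {u, v}" "u \<in> S" "v \<in> S \<or> v \<in> V - (S \<union> T)"
      unfolding edges_ST_def by blast
    have vV: "v \<in> V" using e sub by auto
    have "f u + f v \<ge> 1" using fc e by blast
    moreover have "f u < 1/2 - s" using e(3) S_def b_def s0 by (auto simp: min_def split: if_splits)
    ultimately have "f v > 1/2 + s" by linarith
    then have "b v > s" using \<open>s < 1/2\<close> b_def by (auto simp: min_def)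
    then have "v \<in> T" using vV T_def by simp
    moreover have "v \<notin> S" using \<open>b v > s\<close> s0 S_def by auto
    ultimately show False using e(4) by blast
  qed
  moreover have "S \<inter> T = {}" using S_def T_def s0 by auto
  moreover have "card S > card T" using sc unfolding S_def T_def .
  moreover have "S \<subseteq> V" "T \<subseteq> V" unfolding S_def T_def by auto
  ultimately show ?thesis by (intro exI[of _ S] exI[of _ T]) simp
qed

lemma imp_tau_lt:
  assumes fin: "finite V" and sub: "\<forall>e\<in>H. e \<subseteq> V" and SV: "S \<subseteq> V" and TV: "T \<subseteq> V"
    and disj: "S \<inter> T = {}" and cST: "card S > card T" and emp: "edges_ST V H S T = {}"
  shows "tau_star V H < real (card V)/2"
proof -
  define f where "f v = (if v \<in> S then 0 else if v \<in> T then 1 else (1/2::real))" for v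
  have cov: "frac_vertex_cover V H f"
    unfolding frac_vertex_cover_def
  proof (intro conjI allI impI ballI)
    fix v assume "v \<in> V" then show "f v \<ge> 0" by (simp add: f_def)
  next
    fix u v assume uv: "{u, v} \<in> H"
    then have uV: "u \<in> V" and vV: "v \<in> V" using sub by auto
    have nu: "\<not> (u \<in> S \<and> v \<notin> T)"
    proof
      assume "u \<in> S \<and> v \<notin> T"
      then have "{u, v} \<in> edges_ST V H S T" unfolding edges_ST_def using uv vV by blast
      then show False using emp by simp
    qed
    have nv: "\<not> (v \<in> S \<and> u \<notin> T)"
    proof
      assume "v \<in> S \<and> u \<notin> T"
      moreover have "{v, u} \<in> H" using uv by (simp add: insert_commute)
      ultimately have "{v, u} \<in> edges_ST V H S T" unfolding edges_ST_def using uV by blast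
      then show False using emp by simp
    qed
    show "f u + f v \<ge> 1"
    proof (cases "u \<in> S")
      case True
      then have "v \<in> T" "v \<notin> S" using nu disj by auto
      then show ?thesis using True by (simp add: f_def)
    next
      case uS: False
      show ?thesis
      proof (cases "v \<in> S")
        case True
        then have "u \<in> T" using nv by auto
        then show ?thesis using True uS by (simp add: f_def)
      next
        case False
        then show ?thesis using uS by (simp add: f_def)
      qed
    qed
  qed
  have "\<And>v. v \<in> V \<Longrightarrow> f v = 1/2 - (if v \<in> S then 1/2 else 0) + (if v \<in> T then 1/2 else 0)"
    using disj unfolding f_def by auto
  then have "sum f V = (\<Sum>v\<in>V. 1/2 - (if v \<in> S then 1/2 else 0) + (if v \<in> T then 1/2 else 0))"
    by (rule sum.cong[OF refl])
  also have "\<dots> = real (card V)/2 - (\<Sum>v\<in>V. (if v \<in> S then 1/2 else 0)) + (\<Sum>v\<in>V. (if v \<in> T then 1/2 else 0))"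
    by (simp add: sum.distrib sum_subtractf)
  also have "(\<Sum>v\<in>V. (if v \<in> S then (1/2::real) else 0)) = real (card S) / 2"
  proof -
    have "(\<Sum>v\<in>V. (if v \<in> S then (1/2::real) else 0)) = sum (\<lambda>_. 1/2) (V \<inter> S)"
      using sum.inter_restrict[OF fin, of "\<lambda>_. (1/2::real)" S] by simp
    also have "V \<inter> S = S" using SV by blast
    finally show ?thesis by simp
  qed
  also have "(\<Sum>v\<in>V. (if v \<in> T then (1/2::real) else 0)) = real (card T) / 2"
  proof -
    have "(\<Sum>v\<in>V. (if v \<in> T then (1/2::real) else 0)) = sum (\<lambda>_. 1/2) (V \<inter> T)"
      using sum.inter_restrict[OF fin, of "\<lambda>_. (1/2::real)" T] by simp
    also have "V \<inter> T = T" using TV by blast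
    finally show ?thesis by simp
  qed
  finally have sf: "sum f V = real (card V)/2 - real (card S) / 2 + real (card T) / 2" .
  have "real (card T) < real (card S)" using cST by simp
  then have "sum f V < real (card V)/2" using sf by linarith
  moreover have "tau_star V H \<le> sum f V"
    unfolding tau_star_def using cov by (intro cInf_lower[OF _ cover_set_bdd]) blast
  ultimately show ?thesis by linarith
qed

lemma edges_ST_diff: "edges_ST V (E - F) S T = edges_ST V E S T - F"
  unfolding edges_ST_def by (rule set_eqI) (simp only: mem_Collect_eq Diff_iff, blast)

lemma edges_ST_sub: "edges_ST V E S T \<subseteq> E"
  unfolding edges_ST_def by (rule subsetI) (simp only: mem_Collect_eq)

theorem corollary6:
  fixes V :: "'a set" and E :: "'a set set"
  assumes "simple_graph V E"
  shows "mu V E = Inf {card (edges_ST V E S T) | S T.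
            S \<subseteq> V \<and> T \<subseteq> V \<and> S \<inter> T = {} \<and> card S > card T}"
proof -
  have fin: "finite V" and sub: "\<forall>e\<in>E. e \<subseteq> V"
    using assms unfolding simple_graph_def by auto
  have "E \<subseteq> Pow V" using sub by blast
  then have finE: "finite E" using fin by (simp add: finite_subset)
  define M where "M = {card E' | E'. E' \<subseteq> E \<and> tau_star V (E - E') < real (card V) / 2}"
  define R where "R = {card (edges_ST V E S T) | S T.
            S \<subseteq> V \<and> T \<subseteq> V \<and> S \<inter> T = {} \<and> card S > card T}"
  have RM: "R \<subseteq> M"
  proof
    fix x assume "x \<in> R"
    then obtain S T where ST: "S \<subseteq> V" "T \<subseteq> V" "S \<inter> T = {}" "card S > card T"
      and x: "x = card (edges_ST V E S T)" unfolding R_def by blast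
    define E' where "E' = edges_ST V E S T"
    have "E' \<subseteq> E" unfolding E'_def by (rule edges_ST_sub)
    moreover have "edges_ST V (E - E') S T = {}" unfolding E'_def edges_ST_diff by simp
    moreover have "\<forall>e\<in>E - E'. e \<subseteq> V" using sub by blast
    ultimately have "E' \<subseteq> E \<and> tau_star V (E - E') < real (card V) / 2"
      using imp_tau_lt[OF fin _ ST(1) ST(2) ST(3) ST(4)] by simp
    then show "x \<in> M" unfolding M_def x E'_def by blast
  qed
  have MR: "\<exists>y\<in>R. y \<le> x" if "x \<in> M" for x
  proof -
    obtain E' where E': "E' \<subseteq> E" "tau_star V (E - E') < real (card V) / 2" and x: "x = card E'"
      using \<open>x \<in> M\<close> unfolding M_def by blast
    have "\<forall>e\<in>E - E'. e \<subseteq> V" using sub by blast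
    from tau_lt_imp[OF fin this E'(2)] obtain S T where ST: "S \<subseteq> V" "T \<subseteq> V" "S \<inter> T = {}" "card S > card T"
      and emp: "edges_ST V (E - E') S T = {}"
      by blast
    have "edges_ST V E S T \<subseteq> E'" using emp unfolding edges_ST_diff by blast
    then have "card (edges_ST V E S T) \<le> x" unfolding x
      using E'(1) finE by (simp add: card_mono finite_subset)
    moreover have "card (edges_ST V E S T) \<in> R" unfolding R_def using ST by blast
    ultimately show ?thesis by blast
  qed
  have "Inf M = Inf R"
  proof (cases "R = {}")
    case True
    then have "M = {}" using MR by blast
    then show ?thesis using True by simp
  next
    case False
    then have "M \<noteq> {}" using RM by blast
    have "Inf R \<in> R" using False by (rule Inf_nat_def1)
    then have a: "Inf M \<le> Inf R" using RM by (simp add: cInf_lower subset_iff)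
    have "Inf M \<in> M" using \<open>M \<noteq> {}\<close> by (rule Inf_nat_def1)
    then obtain y where "y \<in> R" "y \<le> Inf M" using MR by blast
    then have "Inf R \<le> Inf M" by (meson cInf_lower bdd_below_bot le_trans)
    then show ?thesis using a by simp
  qed
  then show ?thesis unfolding mu_def M_def R_def .
qed

end
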